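(* Let $(P_t)_{t\in\mathbb{R}_+}$ be a stochastically monotone Feller semigroup on $\mathbb{R}$. For $t\ge0$, $n\ge2$ and $\mathbf{x}=(x_1,\dots,x_n)\in\overline{\mathbb{R}}^n$, let $Q^{(n)}_t(\mathbf{x},\cdot)$ be the law on $\overline{\mathbb{R}}^n$ of $(F^{[-1]}_{x_i,t}(U))_{1\le i\le n}$, where $U$ is uniform on $[0,1]$. Then for all $t\ge0$ and $n\ge2$, $Q^{(n)}_t$ is an order-preserving Markov kernel on $\overline{\mathbb{R}}^n$, and for all $t\ge0$, the family $(Q^{(n)}_t)_{n\ge1}$ with $Q^{(1)}_t=\tilde{P}_t$ is consistent.
   Context: $\overline{\mathbb{R}}=[-\infty,+\infty]$ with the metric $|\tanh y-\tanh x|$, and $\overline{\mathbb{R}}^n$ with the product topology. For $x\in\mathbb{R}$, $F^{[-1]}_{x,t}(u)=\inf\{y\in\mathbb{R}:P_t(x,(-\infty,y])\ge u\}$, and $F^{[-1]}_{\pm\infty,t}\equiv\pm\infty$. $\tilde{P}_t(x,B)=P_t(x,B\cap\mathbb{R})$ for $x\in\mathbb{R}$, $\tilde{P}_t(\pm\infty,\cdot)=\delta_{\pm\infty}$. A kernel $K$ on $\overline{\mathbb{R}}^n$ is order-preserving if for all $\mathbf{x}$, $K(\mathbf{x},\cdot)$-a.s. $\mathbf{y}$ satisfies $x_i\le x_j\Rightarrow y_i\le y_j$ for all $i,j$. A family $(K^{(n)})_{n\ge1}$ of kernels on the powers $S^n$ is consistent if $K^{(n)}(\mathbf{x},(\pi^n_{i_1,\dots,i_k})^{-1}(B))=K^{(k)}(\pi^n_{i_1,\dots,i_k}(\mathbf{x}),B)$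 for all $1\le k\le n$, $i_1,\dots,i_k\in\{1,\dots,n\}$ (repetitions allowed), $\mathbf{x}\in S^n$, measurable $B\subset S^k$, where $\pi^n_{i_1,\dots,i_k}(\mathbf{x})=(x_{i_1},\dots,x_{i_k})$. Feller and stochastically monotone are as usual: $P_t$ maps $\mathcal{C}_0(\mathbb{R})$ into itself with $\sup|P_tf-f|\to0$ as $t\to 0^+$, and $P_t$ maps bounded non-decreasing functions to non-decreasing functions. *)

theory Defs
  imports "HOL-Probability.Probability"
begin

text \<open>A transition semigroup on the reals is given as P :: real => real => real measure,
  P t x being the law P_t(x, .) on the Borel sets of the reals (used for t >= 0).\<close>

definition semigroup_op :: "(real \<Rightarrow> real \<Rightarrow> real measure) \<Rightarrow> real \<Rightarrow> (real \<Rightarrow> real) \<Rightarrow> real \<Rightarrow> real" where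
  "semigroup_op P t f x = (\<integral>y. f y \<partial>(P t x))"

definition C0 :: "(real \<Rightarrow> real) set" where
  "C0 = {f. continuous_on UNIV f \<and> (f \<longlongrightarrow> 0) at_infinity}"

definition markov_semigroup :: "(real \<Rightarrow> real \<Rightarrow> real measure) \<Rightarrow> bool" where
  "markov_semigroup P \<longleftrightarrow>
     (\<forall>t\<ge>0. P t \<in> borel \<rightarrow>\<^sub>M prob_algebra borel) \<and>
     (\<forall>x. P 0 x = return borel x) \<and>
     (\<forall>s\<ge>0. \<forall>t\<ge>0. \<forall>x. P (s + t) x = bind (P s x) (P t))"

definition feller :: "(real \<Rightarrow> real \<Rightarrow> real measure) \<Rightarrow> bool" where
  "feller P \<longleftrightarrow>
     (\<forall>f\<in>C0. (\<forall>t\<ge>0. semigroup_op P t f \<in> C0) \<and>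
        uniform_limit UNIV (\<lambda>t. semigroup_op P t f) f (at_right 0))"

definition stochastically_monotone :: "(real \<Rightarrow> real \<Rightarrow> real measure) \<Rightarrow> bool" where
  "stochastically_monotone P \<longleftrightarrow>
     (\<forall>t\<ge>0. \<forall>f::real \<Rightarrow> real. bounded (range f) \<and> mono f \<longrightarrow> mono (semigroup_op P t f))"

definition Finv :: "(real \<Rightarrow> real \<Rightarrow> real measure) \<Rightarrow> real \<Rightarrow> ereal \<Rightarrow> real \<Rightarrow> ereal" where
  "Finv P t x u = (case x of
      ereal r \<Rightarrow> Inf (ereal ` {y::real. measure (P t r) {..y} \<ge> u})
    | PInfty \<Rightarrow> \<infinity>
    | MInfty \<Rightarrow> -\<infinity>)"

abbreviation ERn :: "nat \<Rightarrow> (nat \<Rightarrow> ereal) measure" where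
  "ERn n \<equiv> PiM {..<n} (\<lambda>_. (borel :: ereal measure))"

definition unif01 :: "real measure" where
  "unif01 = uniform_measure lborel {0..1}"

definition Qn :: "(real \<Rightarrow> real \<Rightarrow> real measure) \<Rightarrow> nat \<Rightarrow> real \<Rightarrow> (nat \<Rightarrow> ereal) \<Rightarrow> (nat \<Rightarrow> ereal) measure" where
  "Qn P n t x = distr unif01 (ERn n) (\<lambda>u. \<lambda>i\<in>{..<n}. Finv P t (x i) u)"

definition Ptilde :: "(real \<Rightarrow> real \<Rightarrow> real measure) \<Rightarrow> real \<Rightarrow> ereal \<Rightarrow> ereal measure" where
  "Ptilde P t x = (case x of
      ereal r \<Rightarrow> distr (P t r) borel ereal
    | PInfty \<Rightarrow> return borel \<infinity>
    | MInfty \<Rightarrow> return borel (-\<infinity>))"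

text \<open>The family with Q^{(1)}_t = tilde P_t (S^1 identified with S via x |-> x 0)
  and Q^{(n)}_t for n >= 2.\<close>
definition Kfam :: "(real \<Rightarrow> real \<Rightarrow> real measure) \<Rightarrow> nat \<Rightarrow> real \<Rightarrow> (nat \<Rightarrow> ereal) \<Rightarrow> (nat \<Rightarrow> ereal) measure" where
  "Kfam P n t x = (if n = 1 then distr (Ptilde P t (x 0)) (ERn 1) (\<lambda>y. \<lambda>i\<in>{..<1}. y)
                   else Qn P n t x)"

definition markov_kernel_on :: "'a measure \<Rightarrow> ('a \<Rightarrow> 'a measure) \<Rightarrow> bool" where
  "markov_kernel_on M K \<longleftrightarrow> K \<in> M \<rightarrow>\<^sub>M prob_algebra M"

definition order_preserving :: "nat \<Rightarrow> ((nat \<Rightarrow> ereal) \<Rightarrow> (nat \<Rightarrow> ereal) measure) \<Rightarrow> bool" where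
  "order_preserving n K \<longleftrightarrow>
     (\<forall>x\<in>space (ERn n). AE y in K x. \<forall>i<n. \<forall>j<n. x i \<le> x j \<longrightarrow> y i \<le> y j)"

definition consistent_family :: "(nat \<Rightarrow> (nat \<Rightarrow> ereal) \<Rightarrow> (nat \<Rightarrow> ereal) measure) \<Rightarrow> bool" where
  "consistent_family K \<longleftrightarrow>
     (\<forall>n k (idx::nat \<Rightarrow> nat) x B. 1 \<le> k \<and> k \<le> n \<and> (\<forall>j<k. idx j < n) \<and>
        x \<in> space (ERn n) \<and> B \<in> sets (ERn k) \<longrightarrow>
        emeasure (K n x) {y\<in>space (ERn n). (\<lambda>j\<in>{..<k}. y (idx j)) \<in> B}
          = emeasure (K k (\<lambda>j\<in>{..<k}. x (idx j))) B)"

end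

theory Submission
  imports Defs
begin

lemma unif01_sets[simp]: "sets unif01 = sets borel"
  by (simp add: unif01_def)
lemma unif01_space[simp]: "space unif01 = UNIV"
  by (simp add: unif01_def)
lemma unif01_prob: "prob_space unif01"
  unfolding unif01_def by (rule prob_space_uniform_measure) auto

lemma unif01_emeasure:
  assumes X: "X \<in> sets borel"
  shows "emeasure unif01 X = emeasure lborel (X \<inter> {0<..<1})"
proof -
  have "emeasure unif01 X = emeasure lborel ({0..1} \<inter> X) / emeasure lborel {0..1::real}"
    unfolding unif01_def using X by (subst emeasure_uniform_measure) auto
  also have "\<dots> = emeasure lborel ({0..1} \<inter> X)" by (simp add: divide_ennreal_def)
  also have "\<dots> = emeasure lborel (X \<inter> {0<..<1})"
  proof (rule emeasure_eq_AE)
    show "AE x in lborel. (x \<in> {0..1} \<inter> X) = (x \<in> X \<inter> {0<..<1})"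
      using AE_lborel_singleton[of 0] AE_lborel_singleton[of 1]
      by eventually_elim auto
  qed (use X in auto)
  finally show ?thesis .
qed

lemma rs: "sets (restrict_space lborel {0<..<1::real}) = sets (restrict_space borel {0<..<1})"
  by (rule sets_restrict_space_cong) simp

lemma distr_unif01_eq:
  assumes g: "g \<in> borel \<rightarrow>\<^sub>M N" and h: "h \<in> restrict_space borel {0<..<1} \<rightarrow>\<^sub>M N"
    and eq: "\<And>u. u \<in> {0<..<1} \<Longrightarrow> g u = h u"
  shows "distr unif01 N g = distr (restrict_space lborel {0<..<1::real}) N h"
proof (rule measure_eqI)
  show "sets (distr unif01 N g) = sets (distr (restrict_space lborel {0<..<1::real}) N h)" by simp
  fix A assume "A \<in> sets (distr unif01 N g)"
  then have A: "A \<in> sets N" by simp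
  have g': "g \<in> unif01 \<rightarrow>\<^sub>M N" using g by (simp add: measurable_cong_sets[OF unif01_sets refl])
  have h': "h \<in> restrict_space lborel {0<..<1} \<rightarrow>\<^sub>M N"
    using h by (simp add: measurable_cong_sets[OF rs refl])
  have gA: "g -` A \<in> sets borel" using measurable_sets[OF g A] by simp
  have "emeasure (distr unif01 N g) A = emeasure unif01 (g -` A)"
    using g' A by (simp add: emeasure_distr)
  also have "\<dots> = emeasure lborel (g -` A \<inter> {0<..<1})" using gA by (rule unif01_emeasure)
  also have "g -` A \<inter> {0<..<1} = h -` A \<inter> {0<..<1}" using eq by auto
  also have "emeasure lborel (h -` A \<inter> {0<..<1}) = emeasure (restrict_space lborel {0<..<1::real}) (h -` A \<inter> space (restrict_space lborel {0<..<1::real}))"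
    by (subst emeasure_restrict_space) (auto simp: space_restrict_space)
  also have "\<dots> = emeasure (distr (restrict_space lborel {0<..<1::real}) N h) A"
    using h' A by (simp add: emeasure_distr)
  finally show "emeasure (distr unif01 N g) A = emeasure (distr (restrict_space lborel {0<..<1::real}) N h) A" .
qed


lemma ereal_le_minf_iff: "(x::ereal) \<le> -\<infinity> \<longleftrightarrow> (\<forall>m::nat. x \<le> ereal (- real m))"
proof
  assume "\<forall>m::nat. x \<le> ereal (- real m)"
  then show "x \<le> -\<infinity>"
  proof (cases x)
    case (real r)
    obtain m :: nat where "- r < real m" using reals_Archimedean2 by blast
    moreover have "x \<le> ereal (- real m)" using \<open>\<forall>m::nat. x \<le> ereal (- real m)\<close> by blast
    ultimately show ?thesis using real by simp
  qed auto
qed auto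

context
  fixes P :: "real \<Rightarrow> real \<Rightarrow> real measure" and t :: real
  assumes Pt: "P t \<in> borel \<rightarrow>\<^sub>M prob_algebra borel"
begin

lemma Pt_prob: "prob_space (P t r)" and Pt_sets: "sets (P t r) = sets borel"
  using measurable_space[OF Pt, of r] by (auto simp: space_prob_algebra)

lemma Pt_space: "space (P t r) = UNIV"
  using sets_eq_imp_space_eq[OF Pt_sets[of r]] by simp

lemma Pt_real_distribution: "real_distribution (P t r)"
  using Pt_prob Pt_sets by (simp add: real_distribution_def real_distribution_axioms_def)

lemma Finv_le_iff: "Finv P t (ereal r) u \<le> ereal a \<longleftrightarrow> u \<le> measure (P t r) {..a}"
proof
  assume "u \<le> measure (P t r) {..a}"
  then show "Finv P t (ereal r) u \<le> ereal a" by (auto simp: Finv_def intro!: Inf_lower)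
next
  assume le: "Finv P t (ereal r) u \<le> ereal a"
  interpret real_distribution "P t r" by (rule Pt_real_distribution)
  show "u \<le> measure (P t r) {..a}"
  proof (rule ccontr)
    assume "\<not> u \<le> measure (P t r) {..a}"
    then have lt: "cdf (P t r) a < u" by (simp add: cdf_def)
    have "\<forall>\<^sub>F y in at_right a. cdf (P t r) y < u"
      using cdf_is_right_cont[of a] lt unfolding continuous_within by (rule order_tendstoD)
    then obtain b where b: "b > a" "\<And>y. y > a \<Longrightarrow> y < b \<Longrightarrow> cdf (P t r) y < u"
      by (auto simp: eventually_at_right_field)
    have "ereal b \<le> Finv P t (ereal r) u"
      unfolding Finv_def
    proof (simp, rule Inf_greatest, clarsimp)
      fix y assume uy: "u \<le> measure (P t r) {..y}"
      show "b \<le> y"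
      proof (rule ccontr)
        assume "\<not> b \<le> y"
        then have "y < b" by simp
        show False
        proof (cases "y \<le> a")
          case True
          then have "cdf (P t r) y \<le> cdf (P t r) a" by (rule cdf_nondecreasing)
          with lt uy show False by (simp add: cdf_def)
        next
          case False
          with b(2)[of y] \<open>y < b\<close> uy show False by (simp add: cdf_def)
        qed
      qed
    qed
    then have "ereal b \<le> ereal a" using le by (rule order.trans)
    with b(1) show False by simp
  qed
qed

lemma meas_cdf[measurable]: "(\<lambda>r. measure (P t r) {..a}) \<in> borel_measurable borel"
  using measurable_compose[OF Pt measurable_measure_prob_algebra[of "{..a}" borel]] by simp

lemma Finv_real_meas:
  "(\<lambda>p. Finv P t (ereal (fst p)) (snd p)) \<in> borel_measurable (borel \<Otimes>\<^sub>M borel :: (real \<times> real) measure)"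
proof (rule borel_measurableI_le)
  fix c :: ereal
  show "{p \<in> space (borel \<Otimes>\<^sub>M borel). Finv P t (ereal (fst p)) (snd p) \<le> c} \<in> sets (borel \<Otimes>\<^sub>M borel :: (real \<times> real) measure)"
  proof (cases c)
    case (real a)
    have "{p \<in> space (borel \<Otimes>\<^sub>M borel). Finv P t (ereal (fst p)) (snd p) \<le> c}
       = {p \<in> space (borel \<Otimes>\<^sub>M borel :: (real \<times> real) measure). snd p \<le> measure (P t (fst p)) {..a}}"
      using real by (simp add: Finv_le_iff)
    also have "\<dots> \<in> sets (borel \<Otimes>\<^sub>M borel)" by measurable
    finally show ?thesis .
  next
    case PInf
    then show ?thesis by simp
  next
    case MInf
    have "{p \<in> space (borel \<Otimes>\<^sub>M borel). Finv P t (ereal (fst p)) (snd p) \<le> c}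
       = {p \<in> space (borel \<Otimes>\<^sub>M borel :: (real \<times> real) measure). \<forall>m::nat. snd p \<le> measure (P t (fst p)) {..- real m}}"
      by (simp only: MInf ereal_le_minf_iff Finv_le_iff)
    also have "\<dots> \<in> sets (borel \<Otimes>\<^sub>M borel)" by measurable
    finally show ?thesis .
  qed
qed

lemma Finv_split: "Finv P t z u = (if z = \<infinity> then \<infinity> else if z = -\<infinity> then -\<infinity> else Finv P t (ereal (real_of_ereal z)) u)"
  by (cases z) (auto simp: Finv_def)

lemma Finv_meas[measurable]:
  "(\<lambda>p. Finv P t (fst p) (snd p)) \<in> borel_measurable (borel \<Otimes>\<^sub>M borel :: (ereal \<times> real) measure)"
proof -
  have m: "(\<lambda>p. (real_of_ereal (fst p), snd p)) \<in> (borel \<Otimes>\<^sub>M borel :: (ereal \<times> real) measure) \<rightarrow>\<^sub>M (borel \<Otimes>\<^sub>M borel)"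
    by measurable
  have "(\<lambda>p. Finv P t (ereal (real_of_ereal (fst p))) (snd p)) \<in> borel_measurable (borel \<Otimes>\<^sub>M borel :: (ereal \<times> real) measure)"
    using measurable_compose[OF m Finv_real_meas] by simp
  moreover have "{x \<in> space (borel \<Otimes>\<^sub>M borel :: (ereal \<times> real) measure). fst x = c} \<in> sets (borel \<Otimes>\<^sub>M borel)" for c
    by (rule measurable_equality_set) auto
  ultimately show ?thesis
    by (subst Finv_split) (intro measurable_If measurable_const; assumption?; simp)
qed

lemma Finv_meas_u[measurable]: "(\<lambda>u. Finv P t z u) \<in> borel_measurable borel"
proof -
  have "(\<lambda>u. (z, u)) \<in> (borel::real measure) \<rightarrow>\<^sub>M (borel \<Otimes>\<^sub>M borel :: (ereal \<times> real) measure)" by measurable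
  from measurable_compose[OF this Finv_meas] show ?thesis by simp
qed

end


lemma distr_unif01_const: "distr unif01 borel (\<lambda>_. c) = return borel (c::ereal)"
proof (rule measure_eqI)
  fix A assume A: "A \<in> sets (distr unif01 borel (\<lambda>_. c))"
  have sp: "emeasure unif01 UNIV = 1"
    using prob_space.emeasure_space_1[OF unif01_prob] by simp
  show "emeasure (distr unif01 borel (\<lambda>_. c)) A = emeasure (return borel c) A"
    using A sp by (simp add: emeasure_distr measurable_cong_sets[OF unif01_sets refl] indicator_def)
qed simp

context
  fixes P :: "real \<Rightarrow> real \<Rightarrow> real measure" and t :: real
  assumes Pt: "P t \<in> borel \<rightarrow>\<^sub>M prob_algebra borel"
begin

lemma distr_Finv: "distr unif01 borel (Finv P t z) = Ptilde P t z"
proof (cases z)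
  case (real r)
  interpret cdf_distribution "P t r"
    unfolding cdf_distribution_def by (rule Pt_real_distribution[of P t, OF Pt])
  have eqI: "Finv P t (ereal r) u = ereal (I u)" if u: "u \<in> {0<..<1}" for u
  proof -
    define m where "m = I u"
    have u0: "0 < u" and u1: "u < 1" using u by auto
    have S: "{y. u \<le> measure (P t r) {..y}} = {y. u \<le> cdf (P t r) y}"
      by (simp add: cdf_def)
    have S2: "{y. u \<le> cdf (P t r) y} = {m..}"
      using pseudoinverse[OF u0 u1] unfolding m_def by blast
    have "Finv P t (ereal r) u = Inf (ereal ` {m..})"
      unfolding Finv_def by (simp only: ereal.case S S2)
    also have "\<dots> = ereal m"
      by (auto intro!: antisym Inf_lower Inf_greatest)
    finally show ?thesis unfolding m_def .
  qed
  have mI: "I \<in> restrict_space lborel {0<..<1} \<rightarrow>\<^sub>M borel"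
    using measurable_CI by (simp add: measurable_cong_sets[OF rs refl])
  have "distr unif01 borel (Finv P t z) = distr (restrict_space lborel {0<..<1::real}) borel (\<lambda>u. ereal (I u))"
    unfolding real
  proof (rule distr_unif01_eq)
    show "Finv P t (ereal r) \<in> borel \<rightarrow>\<^sub>M borel" using Finv_meas_u[of P t, OF Pt] by simp
    show "(\<lambda>u. ereal (I u)) \<in> restrict_space borel {0<..<1} \<rightarrow>\<^sub>M borel"
      using measurable_CI by measurable
  qed (rule eqI)
  also have "\<dots> = distr (distr (restrict_space lborel {0<..<1::real}) borel I) borel ereal"
    by (subst distr_distr) (auto simp: mI comp_def)
  also have "\<dots> = distr (P t r) borel ereal"
    by (simp add: distr_I_eq_M)
  finally show ?thesis using real by (simp add: Ptilde_def)
next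
  case PInf
  have "Finv P t z = (\<lambda>_. \<infinity>)" using PInf by (simp add: Finv_def fun_eq_iff)
  then show ?thesis using PInf by (simp add: Ptilde_def distr_unif01_const)
next
  case MInf
  have "Finv P t z = (\<lambda>_. -\<infinity>)" using MInf by (simp add: Finv_def fun_eq_iff)
  then show ?thesis using MInf by (simp add: Ptilde_def distr_unif01_const)
qed

lemma cdf_anti:
  assumes sm: "stochastically_monotone P" and t: "t \<ge> 0" and rs: "r \<le> s"
  shows "measure (P t s) {..y} \<le> measure (P t r) {..y}"
proof -
  let ?f = "indicator {y<..} :: real \<Rightarrow> real"
  have b: "bounded (range ?f)"
    by (rule boundedI[of _ 1]) auto
  have m: "mono ?f"
    by (rule monoI) (simp add: indicator_def)
  have "mono (semigroup_op P t ?f)" using sm t b m unfolding stochastically_monotone_def by blast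
  then have "semigroup_op P t ?f r \<le> semigroup_op P t ?f s" using rs by (rule monoD)
  then have le: "measure (P t r) {y<..} \<le> measure (P t s) {y<..}"
    by (simp add: semigroup_op_def Pt_space[of P t, OF Pt])
  have c: "measure (P t q) {..y} = 1 - measure (P t q) {y<..}" for q
  proof -
    interpret prob_space "P t q" by (rule Pt_prob[of P t, OF Pt])
    have "measure (P t q) (space (P t q) - {y<..}) = 1 - measure (P t q) {y<..}"
      by (rule prob_compl) (simp add: Pt_sets[of P t, OF Pt])
    moreover have "space (P t q) - {y<..} = {..y}" by (auto simp: Pt_space[of P t, OF Pt])
    ultimately show ?thesis by simp
  qed
  show ?thesis using le by (simp add: c)
qed

lemma Finv_mono:
  assumes sm: "stochastically_monotone P" and t: "t \<ge> 0" and zz: "z \<le> z'"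
  shows "Finv P t z u \<le> Finv P t z' u"
proof (cases z)
  case (real r)
  show ?thesis
  proof (cases z')
    case (real s)
    with \<open>z = ereal r\<close> zz have "r \<le> s" by simp
    have "{y. u \<le> measure (P t s) {..y}} \<subseteq> {y. u \<le> measure (P t r) {..y}}"
      using cdf_anti[OF sm t \<open>r \<le> s\<close>] by (auto intro: order.trans)
    then show ?thesis using \<open>z = ereal r\<close> real
      by (simp add: Finv_def) (intro Inf_superset_mono image_mono)
  qed (use zz real in \<open>auto simp: Finv_def\<close>)
qed (use zz in \<open>auto simp: Finv_def\<close>)

end


lemma fmeas:
  assumes Pt: "P t \<in> borel \<rightarrow>\<^sub>M prob_algebra borel"
  shows "(\<lambda>u. \<lambda>i\<in>{..<n}. Finv P t (x i) u) \<in> unif01 \<rightarrow>\<^sub>M ERn n"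
proof -
  have "(\<lambda>u. \<lambda>i\<in>{..<n}. Finv P t (x i) u) \<in> borel \<rightarrow>\<^sub>M ERn n"
    using Finv_meas_u[of P t, OF Pt] by (intro measurable_restrict) auto
  then show ?thesis by (simp add: measurable_cong_sets[OF unif01_sets refl])
qed

lemma Qn_kernel:
  assumes Pt: "P t \<in> borel \<rightarrow>\<^sub>M prob_algebra borel"
  shows "Qn P n t \<in> ERn n \<rightarrow>\<^sub>M prob_algebra (ERn n)"
proof -
  have joint: "(\<lambda>(x, u). \<lambda>i\<in>{..<n}. Finv P t (x i) u) \<in> ERn n \<Otimes>\<^sub>M borel \<rightarrow>\<^sub>M ERn n"
  proof -
    have "(\<lambda>p. Finv P t (fst p i) (snd p)) \<in> ERn n \<Otimes>\<^sub>M (borel::real measure) \<rightarrow>\<^sub>M borel" if i: "i \<in> {..<n}" for i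
    proof -
      have [measurable]: "(\<lambda>y. y i) \<in> ERn n \<rightarrow>\<^sub>M borel" using i by simp
      have "(\<lambda>p. (fst p i, snd p)) \<in> ERn n \<Otimes>\<^sub>M (borel::real measure) \<rightarrow>\<^sub>M (borel \<Otimes>\<^sub>M borel :: (ereal \<times> real) measure)"
        by measurable
      from measurable_compose[OF this Finv_meas[of P t, OF Pt]] show ?thesis by simp
    qed
    then have "(\<lambda>p. \<lambda>i\<in>{..<n}. Finv P t (fst p i) (snd p)) \<in> ERn n \<Otimes>\<^sub>M (borel::real measure) \<rightarrow>\<^sub>M ERn n"
      by (intro measurable_restrict) auto
    then show ?thesis by (simp add: case_prod_beta)
  qed
  have u: "(\<lambda>_. unif01) \<in> ERn n \<rightarrow>\<^sub>M prob_algebra borel"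
    by (rule measurable_const) (simp add: space_prob_algebra unif01_prob)
  have "(\<lambda>x. distr unif01 (ERn n) (\<lambda>u. \<lambda>i\<in>{..<n}. Finv P t (x i) u)) \<in> ERn n \<rightarrow>\<^sub>M prob_algebra (ERn n)"
    using measurable_distr_prob_space2[OF u joint] by simp
  then show ?thesis unfolding Qn_def[abs_def] by simp
qed

lemma Qn_order:
  assumes Pt: "P t \<in> borel \<rightarrow>\<^sub>M prob_algebra borel" and sm: "stochastically_monotone P" and t: "t \<ge> 0"
    and n: "n \<ge> 2" and x: "x \<in> space (ERn n)"
  shows "AE y in Qn P n t x. \<forall>i<n. \<forall>j<n. x i \<le> x j \<longrightarrow> y i \<le> y j"
proof -
  have si: "{y\<in>space (ERn n). x i \<le> x j \<longrightarrow> y i \<le> y j} \<in> sets (ERn n)" if "i<n" "j<n" for i j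
  proof -
    have mi: "(\<lambda>y. y i) \<in> ERn n \<rightarrow>\<^sub>M borel" "(\<lambda>y. y j) \<in> ERn n \<rightarrow>\<^sub>M borel"
      using that by (intro measurable_component_singleton; simp)+
    have le: "{y\<in>space (ERn n). y i \<le> y j} \<in> sets (ERn n)"
      by (rule borel_measurable_le[OF mi])
    show ?thesis
    proof (cases "x i \<le> x j")
      case True
      then have "{y\<in>space (ERn n). x i \<le> x j \<longrightarrow> y i \<le> y j} = {y\<in>space (ERn n). y i \<le> y j}" by simp
      then show ?thesis using le by simp
    next
      case False
      then have "{y\<in>space (ERn n). x i \<le> x j \<longrightarrow> y i \<le> y j} = space (ERn n)" by simp
      then show ?thesis by simp
    qed
  qed
  have S0: "Measurable.pred (ERn n) (\<lambda>y. \<forall>i<n. \<forall>j<n. x i \<le> x j \<longrightarrow> y i \<le> y j)"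
    apply (rule pred_intros_countable(1), rule pred_intros_imp', rule pred_intros_countable(1), rule pred_intros_imp')
    apply (simp add: pred_def si)
    done
  have S: "{y\<in>space (ERn n). \<forall>i<n. \<forall>j<n. x i \<le> x j \<longrightarrow> y i \<le> y j} \<in> sets (ERn n)"
    using S0 by (simp only: pred_def)
  show ?thesis
    unfolding Qn_def
    by (subst AE_distr_iff[OF fmeas[of P t, OF Pt] S]) (intro AE_I2 allI impI, simp add: Finv_mono[of P t, OF Pt sm t])
qed

theorem proposition3p2:
  fixes P :: "real \<Rightarrow> real \<Rightarrow> real measure"
  assumes "markov_semigroup P" and "feller P" and "stochastically_monotone P"
  shows "(\<forall>t\<ge>0. \<forall>n\<ge>2. markov_kernel_on (ERn n) (Qn P n t) \<and> order_preserving n (Qn P n t))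
       \<and> (\<forall>t\<ge>0. consistent_family (\<lambda>n. Kfam P n t))"
proof (intro conjI allI impI)
  have Pt: "P t \<in> borel \<rightarrow>\<^sub>M prob_algebra borel" if "t \<ge> 0" for t
    using assms(1) that unfolding markov_semigroup_def by blast
  fix t :: real assume t: "t \<ge> 0"
  {
    fix n :: nat assume n: "n \<ge> 2"
    show "markov_kernel_on (ERn n) (Qn P n t)"
      unfolding markov_kernel_on_def by (rule Qn_kernel[of P t, OF Pt[OF t]])
    show "order_preserving n (Qn P n t)"
      unfolding order_preserving_def using Qn_order[of P t, OF Pt[OF t] assms(3) t n] by blast
  }
  show "consistent_family (\<lambda>n. Kfam P n t)"
    unfolding consistent_family_def
  proof (intro allI impI, elim conjE)
    fix n k :: nat and idx :: "nat \<Rightarrow> nat" and x B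
    assume k1: "1 \<le> k" and kn: "k \<le> n" and idx: "\<forall>j<k. idx j < n" and x: "x \<in> space (ERn n)"
      and B: "B \<in> sets (ERn k)"
    let ?x' = "\<lambda>j\<in>{..<k}. x (idx j)"
    let ?S = "{y\<in>space (ERn n). (\<lambda>j\<in>{..<k}. y (idx j)) \<in> B}"
    show "emeasure (Kfam P n t x) ?S = emeasure (Kfam P k t ?x') B"
    proof (cases "n = 1")
      case True
      then have k: "k = 1" using k1 kn by simp
      have i0: "idx 0 = 0" using idx k True by auto
      have ext1: "(\<lambda>j\<in>{..<k}. y (idx j)) = y" if "y \<in> space (ERn n)" for y
        using that True k i0 by (auto simp: space_PiM PiE_def extensional_def fun_eq_iff)
      have "?S = B" using ext1 sets.sets_into_space[OF B] True k by auto
      moreover have "?x' = x" using ext1[OF x] .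
      ultimately show ?thesis using True k by simp
    next
      case False
      then have n2: "n \<ge> 2" using k1 kn by simp
      let ?g = "\<lambda>u. \<lambda>j\<in>{..<k}. Finv P t (x (idx j)) u"
      have gm: "?g \<in> unif01 \<rightarrow>\<^sub>M ERn k"
        using fmeas[of P t, OF Pt[OF t], where n=k and x="\<lambda>j. x (idx j)"] by simp
      have fm: "(\<lambda>u. \<lambda>i\<in>{..<n}. Finv P t (x i) u) \<in> unif01 \<rightarrow>\<^sub>M ERn n"
        by (rule fmeas[of P t, OF Pt[OF t]])
      have pm: "(\<lambda>y. \<lambda>j\<in>{..<k}. y (idx j)) \<in> ERn n \<rightarrow>\<^sub>M ERn k"
        using idx by (intro measurable_restrict) auto
      have S: "?S \<in> sets (ERn n)"
        using measurable_sets[OF pm B] by (simp add: vimage_def Int_def conj_commute)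
      have "emeasure (Kfam P n t x) ?S = emeasure unif01 ((\<lambda>u. \<lambda>i\<in>{..<n}. Finv P t (x i) u) -` ?S)"
        using False fm S by (simp add: Kfam_def Qn_def emeasure_distr)
      also have "(\<lambda>u. \<lambda>i\<in>{..<n}. Finv P t (x i) u) -` ?S = ?g -` B"
      proof -
        have e: "(\<lambda>j\<in>{..<k}. (\<lambda>i\<in>{..<n}. Finv P t (x i) u) (idx j)) = ?g u" for u
          using idx by (auto simp: restrict_def fun_eq_iff)
        have sp: "(\<lambda>i\<in>{..<n}. Finv P t (x i) u) \<in> space (ERn n)" for u
          using measurable_space[OF fm] by simp
        show ?thesis
          unfolding vimage_def using sp e by simp
      qed
      also have "emeasure unif01 (?g -` B) = emeasure (distr unif01 (ERn k) ?g) B"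
        using gm B by (simp add: emeasure_distr)
      also have "distr unif01 (ERn k) ?g = Kfam P k t ?x'"
      proof (cases "k = 1")
        case True
        let ?z = "x (idx 0)"
        have em: "(\<lambda>y. \<lambda>i\<in>{..<1::nat}. y) \<in> (borel::ereal measure) \<rightarrow>\<^sub>M ERn 1"
          by (intro measurable_restrict) auto
        have "Kfam P k t ?x' = distr (Ptilde P t ?z) (ERn 1) (\<lambda>y. \<lambda>i\<in>{..<1}. y)"
          using True by (simp add: Kfam_def)
        also have "\<dots> = distr (distr unif01 borel (Finv P t ?z)) (ERn 1) (\<lambda>y. \<lambda>i\<in>{..<1}. y)"
          by (simp add: distr_Finv[of P t, OF Pt[OF t]])
        also have "\<dots> = distr unif01 (ERn 1) ((\<lambda>y. \<lambda>i\<in>{..<1}. y) \<circ> Finv P t ?z)"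
          using Finv_meas_u[of P t, OF Pt[OF t], of ?z] em
          by (subst distr_distr) (auto simp: measurable_cong_sets[OF unif01_sets refl])
        also have "(\<lambda>y. \<lambda>i\<in>{..<1::nat}. y) \<circ> Finv P t ?z = ?g"
          using True by (auto simp: fun_eq_iff restrict_def)
        finally have "Kfam P k t ?x' = distr unif01 (ERn 1) ?g" .
        then show ?thesis using True by metis
      next
        case False
        then have "k \<noteq> 1" .
        have "(\<lambda>u. \<lambda>i\<in>{..<k}. Finv P t (?x' i) u) = ?g"
          by (auto simp: fun_eq_iff restrict_def)
        then show ?thesis using False by (simp add: Kfam_def Qn_def)
      qed
      finally show ?thesis .
    qed
  qed
qed

end
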